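(* Let $(\mathcal{M},\varphi,\psi)$ be a two-state noncommutative probability space, $n\in\mathbb{N}$ and $\pi\in\mathrm{NC}(n)$. Then for all $a_1,\dots,a_n\in\mathcal{M}$, $$\beta^{\varphi,\psi}_\pi(a_1,\dots,a_n)=\sum_{\rho\in\mathrm{NC}(n),\ \rho\ll\pi}\ \prod_{V\in\mathrm{OB}(\rho)}r_V^{\varphi,\psi}(a_1,\dots,a_n)\prod_{W\in\mathrm{IB}(\rho)}r_W^{\psi}(a_1,\dots,a_n).$$
   Context: A two-state noncommutative probability space is a unital $*$-algebra $\mathcal{M}$ with two states $\varphi,\psi$, $\psi$ tracial. $\mathrm{NC}(n)$: noncrossing partitions of $[n]$; $\mathrm{Int}(n)$: interval partitions. A block $W$ of $\pi$ is nested in a block $V\ne W$ if $\min V\le w\le\max V$ for all $w\in W$; outer blocks are those not nested in any other block, inner blocks are the others; $\mathrm{OB}(\pi)$, $\mathrm{IB}(\pi)$ denote them. For multilinear functionals $(L_n)$ and $V=\{i_1<\dots<i_s\}$, $L_V(a_1,\dots,a_n)=L_s(a_{i_1},\dots,a_{i_s})$. Boolean cumulants $\beta^\theta_n$ of a state $\theta$: $\theta(a_1\cdots a_n)=\sum_{\sigma\in\mathrm{Int}(n)}\prod_{V\in\sigma}\beta^\theta_V(a_1,\dots,a_n)$. Free cumulants $r^\psi$: $\psi(a_1\cdots a_n)=\sum_{\sigma\in\mathrm{NC}(n)}\prod_{V\in\sigma}r^\psi_V$. $c$-free cumulants $r^{\varphi,\psi}$: $\varphi(a_1\cdots a_n)=\sum_{\sigma\in\mathrm{NC}(n)}\prod_{V\in\mathrm{OB}(\sigma)}r^{\varphi,\psi}_V\prod_{W\in\mathrm{IB}(\sigma)}r^\psi_W$.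 The nested two-state Boolean cumulant functional is $\beta^{\varphi,\psi}_\pi(a_1,\dots,a_n):=\prod_{V\in\mathrm{OB}(\pi)}\beta^\varphi_V(a_1,\dots,a_n)\prod_{W\in\mathrm{IB}(\pi)}\beta^\psi_W(a_1,\dots,a_n)$. The irreducible refinement order: for $\rho,\pi\in\mathrm{NC}(n)$, $\rho\ll\pi$ if $\rho\le\pi$ in refinement order (every block of $\rho$ is contained in a block of $\pi$) and for every block $W\in\pi$, $\min W$ and $\max W$ lie in the same block of $\rho$. *)

theory Defs
  imports "HOL-Analysis.Analysis" "HOL-Library.Disjoint_Sets"
begin

text \<open>A unital complex *-algebra: the ring structure comes from the type class ring_1,
  scalar multiplication by complex numbers is smul, and the involution is star.\<close>

definition unital_star_algebra :: "(complex \<Rightarrow> 'a::ring_1 \<Rightarrow> 'a) \<Rightarrow> ('a \<Rightarrow> 'a) \<Rightarrow> bool" where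
  "unital_star_algebra smul star \<longleftrightarrow>
     (\<forall>c x y. smul c (x + y) = smul c x + smul c y) \<and>
     (\<forall>c d x. smul (c + d) x = smul c x + smul d x) \<and>
     (\<forall>c d x. smul c (smul d x) = smul (c * d) x) \<and>
     (\<forall>x. smul 1 x = x) \<and>
     (\<forall>c x y. smul c (x * y) = smul c x * y \<and> smul c (x * y) = x * smul c y) \<and>
     (\<forall>x. star (star x) = x) \<and>
     (\<forall>x y. star (x + y) = star x + star y) \<and>
     (\<forall>c x. star (smul c x) = smul (cnj c) (star x)) \<and>
     (\<forall>x y. star (x * y) = star y * star x)"

definition is_state :: "(complex \<Rightarrow> 'a::ring_1 \<Rightarrow> 'a) \<Rightarrow> ('a \<Rightarrow> 'a) \<Rightarrow> ('a \<Rightarrow> complex) \<Rightarrow> bool" where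
  "is_state smul star \<theta> \<longleftrightarrow>
     (\<forall>x y. \<theta> (x + y) = \<theta> x + \<theta> y) \<and>
     (\<forall>c x. \<theta> (smul c x) = c * \<theta> x) \<and>
     \<theta> 1 = 1 \<and>
     (\<forall>x. Im (\<theta> (star x * x)) = 0 \<and> Re (\<theta> (star x * x)) \<ge> 0)"

definition is_tracial :: "('a::ring_1 \<Rightarrow> complex) \<Rightarrow> bool" where
  "is_tracial \<theta> \<longleftrightarrow> (\<forall>x y. \<theta> (x * y) = \<theta> (y * x))"

definition two_state_ncps ::
  "(complex \<Rightarrow> 'a::ring_1 \<Rightarrow> 'a) \<Rightarrow> ('a \<Rightarrow> 'a) \<Rightarrow> ('a \<Rightarrow> complex) \<Rightarrow> ('a \<Rightarrow> complex) \<Rightarrow> bool" where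
  "two_state_ncps smul star \<phi> \<psi> \<longleftrightarrow>
     unital_star_algebra smul star \<and> is_state smul star \<phi> \<and> is_state smul star \<psi> \<and> is_tracial \<psi>"

section \<open>Partitions of [n] (positions are 0-based: [n] is rendered as {0..<n})\<close>

definition noncrossing :: "nat set set \<Rightarrow> bool" where
  "noncrossing P \<longleftrightarrow> (\<forall>V\<in>P. \<forall>W\<in>P. V \<noteq> W \<longrightarrow>
      \<not> (\<exists>a b c d. a < b \<and> b < c \<and> c < d \<and> a \<in> V \<and> c \<in> V \<and> b \<in> W \<and> d \<in> W))"

definition NC :: "nat \<Rightarrow> nat set set set" where
  "NC n = {P. partition_on {0..<n} P \<and> noncrossing P}"

definition Int_part :: "nat \<Rightarrow> nat set set set" where
  "Int_part n = {P. partition_on {0..<n} P \<and> (\<forall>V\<in>P. \<exists>i j. V = {i..j})}"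

definition nested_in :: "nat set \<Rightarrow> nat set \<Rightarrow> bool" where
  "nested_in W V \<longleftrightarrow> V \<noteq> W \<and> (\<forall>w\<in>W. Min V \<le> w \<and> w \<le> Max V)"

definition OB :: "nat set set \<Rightarrow> nat set set" where
  "OB P = {W\<in>P. \<not> (\<exists>V\<in>P. nested_in W V)}"

definition IB :: "nat set set \<Rightarrow> nat set set" where
  "IB P = {W\<in>P. \<exists>V\<in>P. nested_in W V}"

definition refines :: "nat set set \<Rightarrow> nat set set \<Rightarrow> bool" where
  "refines \<rho> \<pi> \<longleftrightarrow> (\<forall>V\<in>\<rho>. \<exists>W\<in>\<pi>. V \<subseteq> W)"

definition irr_refines :: "nat set set \<Rightarrow> nat set set \<Rightarrow> bool" where
  "irr_refines \<rho> \<pi> \<longleftrightarrow> refines \<rho> \<pi> \<and>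
     (\<forall>W\<in>\<pi>. \<exists>U\<in>\<rho>. Min W \<in> U \<and> Max W \<in> U)"

text \<open>A family of multilinear functionals (L_n) is a function on lists of arguments;
  L_V(a_1,...,a_n) = L_s(a_{i_1},...,a_{i_s}) for V = {i_1 < ... < i_s}.\<close>
definition restr :: "('a list \<Rightarrow> complex) \<Rightarrow> nat set \<Rightarrow> 'a list \<Rightarrow> complex" where
  "restr L V as = L (nths as V)"

definition is_boolean_cumulants :: "('a::ring_1 \<Rightarrow> complex) \<Rightarrow> ('a list \<Rightarrow> complex) \<Rightarrow> bool" where
  "is_boolean_cumulants \<theta> \<beta> \<longleftrightarrow> (\<forall>as. as \<noteq> [] \<longrightarrow>
     \<theta> (prod_list as) = (\<Sum>\<sigma>\<in>Int_part (length as). \<Prod>V\<in>\<sigma>. restr \<beta> V as))"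

definition is_free_cumulants :: "('a::ring_1 \<Rightarrow> complex) \<Rightarrow> ('a list \<Rightarrow> complex) \<Rightarrow> bool" where
  "is_free_cumulants \<psi> r \<longleftrightarrow> (\<forall>as. as \<noteq> [] \<longrightarrow>
     \<psi> (prod_list as) = (\<Sum>\<sigma>\<in>NC (length as). \<Prod>V\<in>\<sigma>. restr r V as))"

definition is_cfree_cumulants ::
  "('a::ring_1 \<Rightarrow> complex) \<Rightarrow> ('a list \<Rightarrow> complex) \<Rightarrow> ('a list \<Rightarrow> complex) \<Rightarrow> bool" where
  "is_cfree_cumulants \<phi> r\<psi> r \<longleftrightarrow> (\<forall>as. as \<noteq> [] \<longrightarrow>
     \<phi> (prod_list as) = (\<Sum>\<sigma>\<in>NC (length as).
        (\<Prod>V\<in>OB \<sigma>. restr r V as) * (\<Prod>W\<in>IB \<sigma>. restr r\<psi> W as)))"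

definition nested_boolean ::
  "('a list \<Rightarrow> complex) \<Rightarrow> ('a list \<Rightarrow> complex) \<Rightarrow> nat set set \<Rightarrow> 'a list \<Rightarrow> complex" where
  "nested_boolean \<beta>\<phi> \<beta>\<psi> \<pi> as = (\<Prod>V\<in>OB \<pi>. restr \<beta>\<phi> V as) * (\<Prod>W\<in>IB \<pi>. restr \<beta>\<psi> W as)"

end

theory Submission
  imports Defs
begin

definition NCp :: "nat set \<Rightarrow> nat set set set" where
  "NCp A = {P. partition_on A P \<and> noncrossing P}"

definition IRR :: "nat set \<Rightarrow> nat set set set" where
  "IRR A = {P \<in> NCp A. \<exists>U\<in>P. Min A \<in> U \<and> Max A \<in> U}"

definition blk :: "nat set set \<Rightarrow> nat set \<Rightarrow> nat set set" where
  "blk \<rho> W = {U \<in> \<rho>. U \<subseteq> W}"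

lemma part_uniq: "partition_on A P \<Longrightarrow> V \<in> P \<Longrightarrow> W \<in> P \<Longrightarrow> x \<in> V \<Longrightarrow> x \<in> W \<Longrightarrow> V = W"
  using disjointD[OF partition_onD2] by blast

lemma part_sub: "partition_on A P \<Longrightarrow> V \<in> P \<Longrightarrow> V \<subseteq> A"
  unfolding partition_on_def by blast

lemma part_ne: "partition_on A P \<Longrightarrow> V \<in> P \<Longrightarrow> V \<noteq> {}"
  unfolding partition_on_def by blast

lemma part_fin: "finite A \<Longrightarrow> partition_on A P \<Longrightarrow> V \<in> P \<Longrightarrow> finite V"
  by (meson finite_subset part_sub)

lemma part_cover: "partition_on A P \<Longrightarrow> x \<in> A \<Longrightarrow> \<exists>V\<in>P. x \<in> V"
  unfolding partition_on_def by blast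

lemma noncrossing_subset: "noncrossing P \<Longrightarrow> Q \<subseteq> P \<Longrightarrow> noncrossing Q"
  unfolding noncrossing_def by blast

lemma noncrossingD: "noncrossing P \<Longrightarrow> V \<in> P \<Longrightarrow> W \<in> P \<Longrightarrow> V \<noteq> W \<Longrightarrow> a < b \<Longrightarrow> b < c \<Longrightarrow> c < d
  \<Longrightarrow> a \<in> V \<Longrightarrow> c \<in> V \<Longrightarrow> b \<in> W \<Longrightarrow> d \<in> W \<Longrightarrow> False"
  unfolding noncrossing_def by blast

lemma blk_IRR:
  assumes fin: "finite A" and \<pi>: "partition_on A \<pi>" and \<rho>: "\<rho> \<in> NCp A" and ir: "irr_refines \<rho> \<pi>"
    and W: "W \<in> \<pi>"
  shows "blk \<rho> W \<in> IRR W"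
proof -
  have \<rho>p: "partition_on A \<rho>" and \<rho>n: "noncrossing \<rho>" using \<rho> by (auto simp: NCp_def)
  have "partition_on W (blk \<rho> W)"
  proof (rule partition_onI)
    show "\<Union> (blk \<rho> W) = W"
    proof
      show "\<Union> (blk \<rho> W) \<subseteq> W" by (auto simp: blk_def)
      show "W \<subseteq> \<Union> (blk \<rho> W)"
      proof
        fix w assume "w \<in> W"
        then have "w \<in> A" using part_sub[OF \<pi> W] by blast
        then obtain U where U: "U \<in> \<rho>" "w \<in> U" using part_cover[OF \<rho>p] by blast
        then obtain W' where "W' \<in> \<pi>" "U \<subseteq> W'" using ir by (auto simp: irr_refines_def refines_def)
        then have "W' = W" using part_uniq[OF \<pi> _ W, of W' w] U \<open>w \<in> W\<close> by blast
        then show "w \<in> \<Union> (blk \<rho> W)" using U \<open>U \<subseteq> W'\<close> by (auto simp: blk_def)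
      qed
    qed
    show "\<And>p q. p \<in> blk \<rho> W \<Longrightarrow> q \<in> blk \<rho> W \<Longrightarrow> p \<noteq> q \<Longrightarrow> disjnt p q"
      using pairwiseD(1)[OF partition_onD2[OF \<rho>p]] by (auto simp: blk_def)
    show "{} \<notin> blk \<rho> W" using \<rho>p by (auto simp: blk_def partition_on_def)
  qed
  moreover have "noncrossing (blk \<rho> W)" using \<rho>n by (rule noncrossing_subset) (auto simp: blk_def)
  moreover have "\<exists>U\<in>blk \<rho> W. Min W \<in> U \<and> Max W \<in> U"
  proof -
    obtain U where U: "U \<in> \<rho>" "Min W \<in> U" "Max W \<in> U" using ir W by (auto simp: irr_refines_def)
    then obtain W' where "W' \<in> \<pi>" "U \<subseteq> W'" using ir by (auto simp: irr_refines_def refines_def)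
    have "Min W \<in> W" using part_fin[OF fin \<pi> W] part_ne[OF \<pi> W] by simp
    then have "W' = W" using part_uniq[OF \<pi> \<open>W' \<in> \<pi>\<close> W] U \<open>U \<subseteq> W'\<close> by blast
    then show ?thesis using U \<open>U \<subseteq> W'\<close> by (auto simp: blk_def)
  qed
  ultimately show ?thesis by (auto simp: IRR_def NCp_def)
qed

lemma union_blk:
  assumes \<rho>: "\<rho> \<in> NCp A" and ir: "irr_refines \<rho> \<pi>"
  shows "\<Union> (blk \<rho> ` \<pi>) = \<rho>"
  using ir by (auto simp: blk_def irr_refines_def refines_def)

lemma IRR_part: "\<tau> \<in> IRR W \<Longrightarrow> partition_on W \<tau>"
  by (auto simp: IRR_def NCp_def)

lemma glue_in:
  assumes fin: "finite A" and \<pi>: "\<pi> \<in> NCp A" and f: "f \<in> PiE \<pi> IRR"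
  shows "\<Union> (f ` \<pi>) \<in> NCp A" "irr_refines (\<Union> (f ` \<pi>)) \<pi>"
proof -
  have \<pi>p: "partition_on A \<pi>" and \<pi>n: "noncrossing \<pi>" using \<pi> by (auto simp: NCp_def)
  have fW: "\<And>W. W \<in> \<pi> \<Longrightarrow> f W \<in> IRR W" using f by auto
  have mem: "\<And>U. U \<in> \<Union> (f ` \<pi>) \<Longrightarrow> \<exists>W\<in>\<pi>. U \<in> f W \<and> U \<subseteq> W"
    using fW IRR_part part_sub by blast
  have "partition_on A (\<Union> (f ` \<pi>))"
  proof (rule partition_onI)
    show "\<Union> (\<Union> (f ` \<pi>)) = A"
    proof -
      have "\<Union> (\<Union> (f ` \<pi>)) = (\<Union>W\<in>\<pi>. \<Union> (f W))" by blast
      also have "\<dots> = (\<Union>W\<in>\<pi>. W)" using fW IRR_part partition_onD1 by (metis (no_types, lifting) SUP_cong)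
      also have "\<dots> = A" using partition_onD1[OF \<pi>p] by simp
      finally show ?thesis .
    qed
    show "{} \<notin> \<Union> (f ` \<pi>)" using fW IRR_part partition_onD3 by blast
    fix p q assume p: "p \<in> \<Union> (f ` \<pi>)" and q: "q \<in> \<Union> (f ` \<pi>)" and pq: "p \<noteq> q"
    obtain W1 where W1: "W1 \<in> \<pi>" "p \<in> f W1" "p \<subseteq> W1" using mem[OF p] by blast
    obtain W2 where W2: "W2 \<in> \<pi>" "q \<in> f W2" "q \<subseteq> W2" using mem[OF q] by blast
    show "disjnt p q"
    proof (cases "W1 = W2")
      case True
      have pW: "partition_on W1 (f W1)" using fW[OF W1(1)] IRR_part by blast
      show ?thesis using pairwiseD(1)[OF partition_onD2[OF pW], of p q] W1 W2 pq True by auto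
    next
      case False
      then show ?thesis using pairwiseD(1)[OF partition_onD2[OF \<pi>p] W1(1) W2(1) False] W1 W2
        by (auto simp: disjnt_def)
    qed
  qed
  moreover have "noncrossing (\<Union> (f ` \<pi>))"
    unfolding noncrossing_def
  proof (intro ballI impI notI)
    fix V W assume V: "V \<in> \<Union> (f ` \<pi>)" and W: "W \<in> \<Union> (f ` \<pi>)" and VW: "V \<noteq> W"
      and ex: "\<exists>a b c d. a < b \<and> b < c \<and> c < d \<and> a \<in> V \<and> c \<in> V \<and> b \<in> W \<and> d \<in> W"
    obtain W1 where W1: "W1 \<in> \<pi>" "V \<in> f W1" "V \<subseteq> W1" using mem[OF V] by blast
    obtain W2 where W2: "W2 \<in> \<pi>" "W \<in> f W2" "W \<subseteq> W2" using mem[OF W] by blast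
    obtain a b c d where abcd: "a < b" "b < c" "c < d" "a \<in> V" "c \<in> V" "b \<in> W" "d \<in> W" using ex by blast
    show False
    proof (cases "W1 = W2")
      case True
      have "noncrossing (f W1)" using fW[OF W1(1)] by (auto simp: IRR_def NCp_def)
      then show False using noncrossingD[of "f W1" V W a b c d] True W1 W2 VW abcd by blast
    next
      case False
      then show False using noncrossingD[OF \<pi>n W1(1) W2(1) False, of a b c d] abcd W1 W2 by blast
    qed
  qed
  ultimately show "\<Union> (f ` \<pi>) \<in> NCp A" by (simp add: NCp_def)
  show "irr_refines (\<Union> (f ` \<pi>)) \<pi>"
    unfolding irr_refines_def refines_def
  proof (intro conjI ballI)
    fix V assume "V \<in> \<Union> (f ` \<pi>)" then show "\<exists>W\<in>\<pi>. V \<subseteq> W" using mem by blast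
  next
    fix W assume W: "W \<in> \<pi>"
    then obtain U where "U \<in> f W" "Min W \<in> U" "Max W \<in> U" using fW[OF W] by (auto simp: IRR_def)
    then show "\<exists>U\<in>\<Union> (f ` \<pi>). Min W \<in> U \<and> Max W \<in> U" using W by blast
  qed
qed

lemma blk_glue:
  assumes \<pi>: "partition_on A \<pi>" and f: "f \<in> PiE \<pi> IRR" and W: "W \<in> \<pi>"
  shows "blk (\<Union> (f ` \<pi>)) W = f W"
proof -
  have fW: "\<And>W. W \<in> \<pi> \<Longrightarrow> partition_on W (f W)" using f IRR_part by blast
  show ?thesis
  proof
    show "blk (\<Union> (f ` \<pi>)) W \<subseteq> f W"
    proof
      fix U assume "U \<in> blk (\<Union> (f ` \<pi>)) W"
      then obtain W' where W': "W' \<in> \<pi>" "U \<in> f W'" "U \<subseteq> W" by (auto simp: blk_def)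
      have "U \<noteq> {}" "U \<subseteq> W'" using part_ne[OF fW[OF W'(1)] W'(2)] part_sub[OF fW[OF W'(1)] W'(2)] by auto
      then have "W' = W" using part_uniq[OF \<pi> W'(1) W] W'(3) by blast
      then show "U \<in> f W" using W' by simp
    qed
    show "f W \<subseteq> blk (\<Union> (f ` \<pi>)) W" using W part_sub[OF fW[OF W]] by (auto simp: blk_def)
  qed
qed


lemma blockMinMax:
  assumes "finite A" "partition_on A P" "V \<in> P"
  shows "Min V \<in> V" "Max V \<in> V" "\<And>v. v \<in> V \<Longrightarrow> Min V \<le> v" "\<And>v. v \<in> V \<Longrightarrow> v \<le> Max V"
  using part_fin[OF assms] part_ne[OF assms(2,3)] by auto

lemma OB_glue:
  assumes fin: "finite A" and \<pi>: "\<pi> \<in> NCp A" and f: "f \<in> PiE \<pi> IRR" and W: "W \<in> \<pi>" and U: "U \<in> f W"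
  shows "U \<in> OB (\<Union> (f ` \<pi>)) \<longleftrightarrow> W \<in> OB \<pi> \<and> U \<in> OB (f W)"
proof -
  have \<pi>p: "partition_on A \<pi>" and \<pi>n: "noncrossing \<pi>" using \<pi> by (auto simp: NCp_def)
  have fW: "\<And>W. W \<in> \<pi> \<Longrightarrow> f W \<in> IRR W" using f by auto
  have fWp: "\<And>W. W \<in> \<pi> \<Longrightarrow> partition_on W (f W)" using fW IRR_part by blast
  have finW: "\<And>W. W \<in> \<pi> \<Longrightarrow> finite W" using part_fin[OF fin \<pi>p] .
  note mmW = blockMinMax[OF fin \<pi>p]
  have mem: "\<And>U. U \<in> \<Union> (f ` \<pi>) \<Longrightarrow> \<exists>W\<in>\<pi>. U \<in> f W \<and> U \<subseteq> W"
    using fWp part_sub by blast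
  have UW: "U \<subseteq> W" "U \<noteq> {}" using part_sub[OF fWp[OF W] U] part_ne[OF fWp[OF W] U] by auto
  note mmU = blockMinMax[OF finW[OF W] fWp[OF W] U]
  show ?thesis
  proof
    assume H: "U \<in> OB (\<Union> (f ` \<pi>))"
    have "U \<in> OB (f W)" using H U W by (auto simp: OB_def)
    moreover have "W \<in> OB \<pi>"
    proof (rule ccontr)
      assume "W \<notin> OB \<pi>"
      then obtain W' where W': "W' \<in> \<pi>" "nested_in W W'" using W by (auto simp: OB_def)
      obtain U' where U': "U' \<in> f W'" "Min W' \<in> U'" "Max W' \<in> U'" using fW[OF W'(1)] by (auto simp: IRR_def)
      note mmU' = blockMinMax[OF finW[OF W'(1)] fWp[OF W'(1)] U'(1)]
      have "W' \<noteq> W" using W' by (auto simp: nested_in_def)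
      have "U' \<noteq> U"
      proof
        assume "U' = U"
        then have "Min W' \<in> W" using U' UW by blast
        then show False using part_uniq[OF \<pi>p W W'(1)] mmW(1)[OF W'(1)] \<open>W' \<noteq> W\<close> by blast
      qed
      have "nested_in U U'"
        unfolding nested_in_def
      proof (intro conjI ballI)
        show "U' \<noteq> U" by fact
        fix u assume "u \<in> U"
        then have "u \<in> W" using UW by blast
        then have "Min W' \<le> u" "u \<le> Max W'" using W' by (auto simp: nested_in_def)
        moreover have "Min U' \<le> Min W'" "Max W' \<le> Max U'" using mmU' U' by auto
        ultimately show "Min U' \<le> u" "u \<le> Max U'" by auto
      qed
      moreover have "U' \<in> \<Union> (f ` \<pi>)" using U' W' by blast
      ultimately show False using H by (auto simp: OB_def)
    qed
    ultimately show "W \<in> OB \<pi> \<and> U \<in> OB (f W)" by blast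
  next
    assume H: "W \<in> OB \<pi> \<and> U \<in> OB (f W)"
    have "U \<in> \<Union> (f ` \<pi>)" using U W by blast
    moreover have "\<not> (\<exists>V\<in>\<Union> (f ` \<pi>). nested_in U V)"
    proof
      assume "\<exists>V\<in>\<Union> (f ` \<pi>). nested_in U V"
      then obtain V W' where V: "W' \<in> \<pi>" "V \<in> f W'" "nested_in U V" by blast
      show False
      proof (cases "W' = W")
        case True
        then show False using H V by (auto simp: OB_def)
      next
        case False
        have VW': "V \<subseteq> W'" "V \<noteq> {}" using part_sub[OF fWp[OF V(1)] V(2)] part_ne[OF fWp[OF V(1)] V(2)] by auto
        note mmV = blockMinMax[OF finW[OF V(1)] fWp[OF V(1)] V(2)]
        obtain u where u: "u \<in> U" using UW by blast
        have uW: "u \<in> W" using u UW by blast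
        have "Min V \<le> u" "u \<le> Max V" using V(3) u by (auto simp: nested_in_def)
        moreover have "Min W' \<le> Min V" "Max V \<le> Max W'" using mmV mmW[OF V(1)] VW' by auto
        moreover have "u \<noteq> Min W'" "u \<noteq> Max W'"
          using part_uniq[OF \<pi>p W V(1) uW] mmW[OF V(1)] False by auto
        ultimately have ub: "Min W' < u" "u < Max W'" by auto
        have "nested_in W W'"
          unfolding nested_in_def
        proof (intro conjI ballI)
          show "W' \<noteq> W" by fact
          fix w assume w: "w \<in> W"
          show "Min W' \<le> w"
          proof (rule ccontr)
            assume "\<not> Min W' \<le> w"
            then show False using noncrossingD[OF \<pi>n W V(1) False[symmetric], of w "Min W'" u "Max W'"]
              ub w uW mmW[OF V(1)] by auto
          qed
          show "w \<le> Max W'"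
          proof (rule ccontr)
            assume "\<not> w \<le> Max W'"
            then show False using noncrossingD[OF \<pi>n V(1) W False, of "Min W'" u "Max W'" w]
              ub w uW mmW[OF V(1)] by auto
          qed
        qed
        then show False using H V(1) by (auto simp: OB_def)
      qed
    qed
    ultimately show "U \<in> OB (\<Union> (f ` \<pi>))" by (simp add: OB_def)
  qed
qed

definition Fw :: "('a list \<Rightarrow> complex) \<Rightarrow> ('a list \<Rightarrow> complex) \<Rightarrow> 'a list \<Rightarrow> nat set set \<Rightarrow> complex" where
  "Fw r1 r2 as P = (\<Prod>V\<in>OB P. restr r1 V as) * (\<Prod>W\<in>IB P. restr r2 W as)"

lemma OB_IB: "OB P \<union> IB P = P" "OB P \<inter> IB P = {}"
  by (auto simp: OB_def IB_def)

lemma Fw_alt: "finite P \<Longrightarrow> Fw r1 r2 as P = (\<Prod>U\<in>P. if U \<in> OB P then restr r1 U as else restr r2 U as)"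
proof -
  assume "finite P"
  have "(\<Prod>U\<in>P. if U \<in> OB P then restr r1 U as else restr r2 U as)
     = (\<Prod>U\<in>OB P \<union> IB P. if U \<in> OB P then restr r1 U as else restr r2 U as)" using OB_IB by simp
  also have "\<dots> = (\<Prod>U\<in>OB P. if U \<in> OB P then restr r1 U as else restr r2 U as) *
                   (\<Prod>U\<in>IB P. if U \<in> OB P then restr r1 U as else restr r2 U as)"
    by (rule prod.union_disjoint) (use \<open>finite P\<close> in \<open>auto simp: OB_def IB_def\<close>)
  also have "\<dots> = Fw r1 r2 as P" unfolding Fw_def
    by (intro arg_cong2[where f="(*)"] prod.cong) (auto simp: OB_def IB_def)
  finally show ?thesis by simp
qed

lemma Fw_same: "finite P \<Longrightarrow> Fw r r as P = (\<Prod>U\<in>P. restr r U as)"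
  by (simp add: Fw_alt)

definition hW where
  "hW r1 r2 as \<pi> W \<tau> = (if W \<in> OB \<pi> then Fw r1 r2 as \<tau> else Fw r2 r2 as \<tau>)"

lemma finite_NCp: "finite A \<Longrightarrow> finite (NCp A)"
  by (rule finite_subset[OF _ finitely_many_partition_on]) (auto simp: NCp_def)

lemma finite_IRR: "finite A \<Longrightarrow> finite (IRR A)"
  by (rule finite_subset[OF _ finite_NCp]) (auto simp: IRR_def)

lemma Fw_glue:
  assumes fin: "finite A" and \<pi>: "\<pi> \<in> NCp A" and f: "f \<in> PiE \<pi> IRR"
  shows "Fw r1 r2 as (\<Union> (f ` \<pi>)) = (\<Prod>W\<in>\<pi>. hW r1 r2 as \<pi> W (f W))"
proof -
  have \<pi>p: "partition_on A \<pi>" using \<pi> by (auto simp: NCp_def)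
  have fW: "\<And>W. W \<in> \<pi> \<Longrightarrow> f W \<in> IRR W" using f by auto
  have fWp: "\<And>W. W \<in> \<pi> \<Longrightarrow> partition_on W (f W)" using fW IRR_part by blast
  have finW: "\<And>W. W \<in> \<pi> \<Longrightarrow> finite W" using part_fin[OF fin \<pi>p] .
  have finfW: "\<And>W. W \<in> \<pi> \<Longrightarrow> finite (f W)" using finite_elements[OF finW fWp] .
  have fin\<pi>: "finite \<pi>" using finite_elements[OF fin \<pi>p] .
  have disj: "\<forall>W\<in>\<pi>. \<forall>W'\<in>\<pi>. W \<noteq> W' \<longrightarrow> f W \<inter> f W' = {}"
  proof (intro ballI impI)
    fix W W' assume W: "W \<in> \<pi>" "W' \<in> \<pi>" "W \<noteq> W'"
    show "f W \<inter> f W' = {}"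
    proof (rule ccontr)
      assume "f W \<inter> f W' \<noteq> {}"
      then obtain U where U: "U \<in> f W" "U \<in> f W'" by blast
      obtain u where "u \<in> U" using part_ne[OF fWp[OF W(1)] U(1)] by blast
      then have "u \<in> W" "u \<in> W'" using part_sub[OF fWp[OF W(1)] U(1)] part_sub[OF fWp[OF W(2)] U(2)] by auto
      then show False using part_uniq[OF \<pi>p W(1) W(2)] W(3) by blast
    qed
  qed
  let ?g = "\<lambda>U. if U \<in> OB (\<Union> (f ` \<pi>)) then restr r1 U as else restr r2 U as"
  have "finite (\<Union> (f ` \<pi>))" using fin\<pi> finfW by blast
  then have "Fw r1 r2 as (\<Union> (f ` \<pi>)) = (\<Prod>U\<in>\<Union> (f ` \<pi>). ?g U)" by (rule Fw_alt)
  also have "\<dots> = (\<Prod>W\<in>\<pi>. \<Prod>U\<in>f W. ?g U)"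
    by (rule prod.UNION_disjoint[OF fin\<pi>]) (use finfW disj in auto)
  also have "\<dots> = (\<Prod>W\<in>\<pi>. hW r1 r2 as \<pi> W (f W))"
  proof (rule prod.cong[OF refl])
    fix W assume W: "W \<in> \<pi>"
    show "(\<Prod>U\<in>f W. ?g U) = hW r1 r2 as \<pi> W (f W)"
    proof (cases "W \<in> OB \<pi>")
      case True
      have "(\<Prod>U\<in>f W. ?g U) = (\<Prod>U\<in>f W. if U \<in> OB (f W) then restr r1 U as else restr r2 U as)"
        by (rule prod.cong[OF refl]) (use OB_glue[OF fin \<pi> f W] True in auto)
      then show ?thesis using True Fw_alt[OF finfW[OF W], of r1 r2 as] by (simp add: hW_def)
    next
      case False
      have "(\<Prod>U\<in>f W. ?g U) = (\<Prod>U\<in>f W. restr r2 U as)"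
        by (rule prod.cong[OF refl]) (use OB_glue[OF fin \<pi> f W] False in auto)
      then show ?thesis using False Fw_same[OF finfW[OF W], of r2 as] by (simp add: hW_def)
    qed
  qed
  finally show ?thesis .
qed

lemma L3:
  assumes fin: "finite A" and \<pi>: "\<pi> \<in> NCp A"
  shows "(\<Sum>\<rho>\<in>{\<rho>\<in>NCp A. irr_refines \<rho> \<pi>}. Fw r1 r2 as \<rho>) =
    (\<Prod>W\<in>OB \<pi>. \<Sum>\<tau>\<in>IRR W. Fw r1 r2 as \<tau>) * (\<Prod>W\<in>IB \<pi>. \<Sum>\<tau>\<in>IRR W. Fw r2 r2 as \<tau>)"
proof -
  have \<pi>p: "partition_on A \<pi>" using \<pi> by (auto simp: NCp_def)
  have fin\<pi>: "finite \<pi>" using finite_elements[OF fin \<pi>p] .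
  have finW: "\<And>W. W \<in> \<pi> \<Longrightarrow> finite W" using part_fin[OF fin \<pi>p] .
  have "(\<Sum>\<rho>\<in>{\<rho>\<in>NCp A. irr_refines \<rho> \<pi>}. Fw r1 r2 as \<rho>) =
        (\<Sum>f\<in>PiE \<pi> IRR. \<Prod>W\<in>\<pi>. hW r1 r2 as \<pi> W (f W))"
  proof (rule sum.reindex_bij_witness[where j = "\<lambda>\<rho>. restrict (blk \<rho>) \<pi>" and i = "\<lambda>f. \<Union> (f ` \<pi>)"])
    fix \<rho> assume \<rho>: "\<rho> \<in> {\<rho>\<in>NCp A. irr_refines \<rho> \<pi>}"
    show "\<Union> (restrict (blk \<rho>) \<pi> ` \<pi>) = \<rho>" using union_blk[of \<rho> A \<pi>] \<rho> by simp
    show "restrict (blk \<rho>) \<pi> \<in> PiE \<pi> IRR" using blk_IRR[OF fin \<pi>p] \<rho> by auto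
    show "(\<Prod>W\<in>\<pi>. hW r1 r2 as \<pi> W (restrict (blk \<rho>) \<pi> W)) = Fw r1 r2 as \<rho>"
    proof -
      have "restrict (blk \<rho>) \<pi> \<in> PiE \<pi> IRR" using blk_IRR[OF fin \<pi>p] \<rho> by auto
      from Fw_glue[OF fin \<pi> this, of r1 r2 as] show ?thesis using union_blk[of \<rho> A \<pi>] \<rho> by simp
    qed
  next
    fix f assume f: "f \<in> PiE \<pi> IRR"
    show "restrict (blk (\<Union> (f ` \<pi>))) \<pi> = f"
      using blk_glue[OF \<pi>p f] f by (auto simp: restrict_def fun_eq_iff PiE_def extensional_def)
    show "\<Union> (f ` \<pi>) \<in> {\<rho>\<in>NCp A. irr_refines \<rho> \<pi>}" using glue_in[OF fin \<pi> f] by simp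
  qed
  also have "\<dots> = (\<Prod>W\<in>\<pi>. \<Sum>\<tau>\<in>IRR W. hW r1 r2 as \<pi> W \<tau>)"
    by (rule prod_sum_PiE[symmetric]) (use fin\<pi> finW finite_IRR in auto)
  also have "\<dots> = (\<Prod>W\<in>OB \<pi> \<union> IB \<pi>. \<Sum>\<tau>\<in>IRR W. hW r1 r2 as \<pi> W \<tau>)" using OB_IB by simp
  also have "\<dots> = (\<Prod>W\<in>OB \<pi>. \<Sum>\<tau>\<in>IRR W. hW r1 r2 as \<pi> W \<tau>) * (\<Prod>W\<in>IB \<pi>. \<Sum>\<tau>\<in>IRR W. hW r1 r2 as \<pi> W \<tau>)"
    by (rule prod.union_disjoint) (use fin\<pi> in \<open>auto simp: OB_def IB_def\<close>)
  also have "\<dots> = (\<Prod>W\<in>OB \<pi>. \<Sum>\<tau>\<in>IRR W. Fw r1 r2 as \<tau>) * (\<Prod>W\<in>IB \<pi>. \<Sum>\<tau>\<in>IRR W. Fw r2 r2 as \<tau>)"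
    by (intro arg_cong2[where f="(*)"] prod.cong refl sum.cong) (auto simp: hW_def OB_def IB_def)
  finally show ?thesis .
qed


definition convex_in :: "nat set \<Rightarrow> nat set \<Rightarrow> bool" where
  "convex_in A V \<longleftrightarrow> (\<forall>x\<in>V. \<forall>z\<in>V. \<forall>y\<in>A. x \<le> y \<longrightarrow> y \<le> z \<longrightarrow> y \<in> V)"

definition IntP :: "nat set \<Rightarrow> nat set set set" where
  "IntP A = {P. partition_on A P \<and> (\<forall>V\<in>P. convex_in A V)}"

lemma finite_IntP: "finite A \<Longrightarrow> finite (IntP A)"
  by (rule finite_subset[OF _ finitely_many_partition_on]) (auto simp: IntP_def)

lemma IntP_NCp: "\<sigma> \<in> IntP A \<Longrightarrow> \<sigma> \<in> NCp A"
  unfolding NCp_def noncrossing_def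
proof (clarify, intro conjI)
  assume \<sigma>: "\<sigma> \<in> IntP A"
  then show "partition_on A \<sigma>" by (simp add: IntP_def)
  show "\<forall>V\<in>\<sigma>. \<forall>W\<in>\<sigma>. V \<noteq> W \<longrightarrow> \<not> (\<exists>a b c d. a < b \<and> b < c \<and> c < d \<and> a \<in> V \<and> c \<in> V \<and> b \<in> W \<and> d \<in> W)"
  proof (intro ballI impI notI)
    fix V W assume V: "V \<in> \<sigma>" and W: "W \<in> \<sigma>" and VW: "V \<noteq> W"
      and "\<exists>a b c d. a < b \<and> b < c \<and> c < d \<and> a \<in> V \<and> c \<in> V \<and> b \<in> W \<and> d \<in> W"
    then obtain a b c d where abcd: "a < b" "b < c" "c < d" "a \<in> V" "c \<in> V" "b \<in> W" "d \<in> W" by blast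
    have p: "partition_on A \<sigma>" using \<sigma> by (simp add: IntP_def)
    have "b \<in> A" using part_sub[OF p W] abcd by blast
    have "convex_in A V" using \<sigma> V by (simp add: IntP_def)
    then have "b \<in> V" using abcd \<open>b \<in> A\<close> unfolding convex_in_def by (meson less_imp_le)
    then show False using part_uniq[OF p V W _ abcd(6)] VW by blast
  qed
qed

lemma IntP_IB: assumes fin: "finite A" and \<sigma>: "\<sigma> \<in> IntP A" shows "IB \<sigma> = {}"
proof -
  have p: "partition_on A \<sigma>" using \<sigma> by (simp add: IntP_def)
  { fix W V assume W: "W \<in> \<sigma>" and V: "V \<in> \<sigma>" and n: "nested_in W V"
    obtain w where w: "w \<in> W" using part_ne[OF p W] by blast
    have "w \<in> A" using part_sub[OF p W] w by blast
    moreover have "Min V \<le> w" "w \<le> Max V" using n w by (auto simp: nested_in_def)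
    moreover have "convex_in A V" using \<sigma> V by (simp add: IntP_def)
    ultimately have "w \<in> V" using blockMinMax[OF fin p V] unfolding convex_in_def by blast
    then have False using part_uniq[OF p V W _ w] n by (auto simp: nested_in_def) }
  then show ?thesis by (auto simp: IB_def)
qed

lemma IntP_OB: "finite A \<Longrightarrow> \<sigma> \<in> IntP A \<Longrightarrow> OB \<sigma> = \<sigma>"
  using IntP_IB OB_IB by blast

lemma outer_cover:
  assumes fin: "finite A" and \<rho>: "\<rho> \<in> NCp A" and U: "U \<in> \<rho>"
  shows "\<exists>V\<in>OB \<rho>. \<forall>u\<in>U. Min V \<le> u \<and> u \<le> Max V"
  using U
proof (induction U rule: measure_induct_rule[where f = "\<lambda>U. Max A - (Max U - Min U)"])
  case (less U)
  have p: "partition_on A \<rho>" using \<rho> by (simp add: NCp_def)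
  note mmU = blockMinMax[OF fin p less.prems]
  show ?case
  proof (cases "U \<in> OB \<rho>")
    case True
    moreover have "\<forall>u\<in>U. Min U \<le> u \<and> u \<le> Max U" using mmU by simp
    ultimately show ?thesis by blast
  next
    case False
    then obtain V' where V': "V' \<in> \<rho>" "nested_in U V'" using less.prems by (auto simp: OB_def)
    note mmV' = blockMinMax[OF fin p V'(1)]
    have le: "Min V' \<le> Min U" "Max U \<le> Max V'" using V'(2) mmU by (auto simp: nested_in_def)
    have "Min V' \<noteq> Min U"
    proof
      assume "Min V' = Min U"
      then have "U = V'" using part_uniq[OF p less.prems V'(1) mmU(1)] mmV'(1) by metis
      then show False using V'(2) by (simp add: nested_in_def)
    qed
    then have lt: "Min V' < Min U" using le by simp
    have "Max V' \<in> A" using part_sub[OF p V'(1)] mmV'(2) by blast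
    then have "Max V' \<le> Max A" using fin by simp
    then have "Max A - (Max V' - Min V') < Max A - (Max U - Min U)" using le lt mmU(3)[OF mmU(2)] by linarith
    then obtain V where V: "V \<in> OB \<rho>" "\<forall>u\<in>V'. Min V \<le> u \<and> u \<le> Max V" using less.IH V'(1) by blast
    have "\<forall>u\<in>U. Min V \<le> u \<and> u \<le> Max V"
    proof
      fix u assume "u \<in> U"
      then have "Min V' \<le> u" "u \<le> Max V'" using V'(2) by (auto simp: nested_in_def)
      moreover have "Min V \<le> Min V'" "Max V' \<le> Max V" using V(2) mmV'(1,2) by auto
      ultimately show "Min V \<le> u \<and> u \<le> Max V" by linarith
    qed
    then show ?thesis using V(1) by blast
  qed
qed

lemma outer_disj_aux:
  assumes fin: "finite A" and \<rho>: "\<rho> \<in> NCp A" and V1: "V1 \<in> OB \<rho>" and V2: "V2 \<in> OB \<rho>"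
    and lt: "Min V1 < Min V2"
  shows "{Min V1..Max V1} \<inter> {Min V2..Max V2} = {}"
proof (rule ccontr)
  assume ne: "{Min V1..Max V1} \<inter> {Min V2..Max V2} \<noteq> {}"
  have p: "partition_on A \<rho>" and nc: "noncrossing \<rho>" using \<rho> by (auto simp: NCp_def)
  have V1r: "V1 \<in> \<rho>" and V2r: "V2 \<in> \<rho>" using V1 V2 by (auto simp: OB_def)
  note m1 = blockMinMax[OF fin p V1r] and m2 = blockMinMax[OF fin p V2r]
  have "V1 \<noteq> V2" using lt by auto
  have "Min V2 \<le> Max V1" using ne lt by auto
  moreover have "Min V2 \<noteq> Max V1" using part_uniq[OF p V1r V2r, of "Min V2"] m1 m2 \<open>V1 \<noteq> V2\<close> by auto
  ultimately have a: "Min V2 < Max V1" by simp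
  show False
  proof (cases "Max V2 \<le> Max V1")
    case True
    have "nested_in V2 V1" unfolding nested_in_def
    proof (intro conjI ballI)
      fix v assume "v \<in> V2"
      then show "Min V1 \<le> v" "v \<le> Max V1" using True lt m2(3,4)[of v] by linarith+
    qed (use \<open>V1 \<noteq> V2\<close> in auto)
    then show False using V2 V1r by (auto simp: OB_def)
  next
    case False
    then show False using noncrossingD[OF nc V1r V2r \<open>V1 \<noteq> V2\<close>, of "Min V1" "Min V2" "Max V1" "Max V2"]
      lt a m1 m2 by auto
  qed
qed

definition canon :: "nat set \<Rightarrow> nat set set \<Rightarrow> nat set set" where
  "canon A \<rho> = (\<lambda>U. A \<inter> {Min U..Max U}) ` OB \<rho>"

lemma canon_IntP:
  assumes fin: "finite A" and \<rho>: "\<rho> \<in> NCp A"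
  shows "canon A \<rho> \<in> IntP A" "irr_refines \<rho> (canon A \<rho>)"
proof -
  have p: "partition_on A \<rho>" using \<rho> by (simp add: NCp_def)
  have OBr: "\<And>V. V \<in> OB \<rho> \<Longrightarrow> V \<in> \<rho>" by (auto simp: OB_def)
  have sub: "\<And>V. V \<in> OB \<rho> \<Longrightarrow> V \<subseteq> A \<inter> {Min V..Max V}"
    using blockMinMax[OF fin p] part_sub[OF p] OBr by fastforce
  have ivmin: "\<And>V. V \<in> OB \<rho> \<Longrightarrow> Min (A \<inter> {Min V..Max V}) = Min V \<and> Max (A \<inter> {Min V..Max V}) = Max V"
  proof -
    fix V assume V: "V \<in> OB \<rho>"
    note m = blockMinMax[OF fin p OBr[OF V]]
    have "Min V \<in> A \<inter> {Min V..Max V}" "Max V \<in> A \<inter> {Min V..Max V}" using sub[OF V] m by auto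
    moreover have f: "finite (A \<inter> {Min V..Max V})" using fin by simp
    ultimately have "Min (A \<inter> {Min V..Max V}) \<in> A \<inter> {Min V..Max V}" "Max (A \<inter> {Min V..Max V}) \<in> A \<inter> {Min V..Max V}"
      using Min_in[OF f] Max_in[OF f] by blast+
    then show "Min (A \<inter> {Min V..Max V}) = Min V \<and> Max (A \<inter> {Min V..Max V}) = Max V"
      using f \<open>Min V \<in> A \<inter> {Min V..Max V}\<close> \<open>Max V \<in> A \<inter> {Min V..Max V}\<close>
      by (intro conjI antisym) auto
  qed
  have "partition_on A (canon A \<rho>)"
  proof (rule partition_onI)
    show "\<Union> (canon A \<rho>) = A"
    proof
      show "\<Union> (canon A \<rho>) \<subseteq> A" by (auto simp: canon_def)
      show "A \<subseteq> \<Union> (canon A \<rho>)"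
      proof
        fix a assume "a \<in> A"
        then obtain U where U: "U \<in> \<rho>" "a \<in> U" using part_cover[OF p] by blast
        then obtain V where "V \<in> OB \<rho>" "\<forall>u\<in>U. Min V \<le> u \<and> u \<le> Max V" using outer_cover[OF fin \<rho>] by blast
        then show "a \<in> \<Union> (canon A \<rho>)" using U \<open>a \<in> A\<close> by (auto simp: canon_def)
      qed
    qed
    show "{} \<notin> canon A \<rho>" using sub blockMinMax[OF fin p] OBr by (fastforce simp: canon_def)
    fix P Q assume P: "P \<in> canon A \<rho>" and Q: "Q \<in> canon A \<rho>" and PQ: "P \<noteq> Q"
    obtain V1 where V1: "V1 \<in> OB \<rho>" "P = A \<inter> {Min V1..Max V1}" using P by (auto simp: canon_def)
    obtain V2 where V2: "V2 \<in> OB \<rho>" "Q = A \<inter> {Min V2..Max V2}" using Q by (auto simp: canon_def)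
    have "V1 \<noteq> V2" using PQ V1 V2 by auto
    then have "Min V1 \<noteq> Min V2" using part_uniq[OF p OBr[OF V1(1)] OBr[OF V2(1)], of "Min V1"]
      blockMinMax[OF fin p OBr[OF V1(1)]] blockMinMax[OF fin p OBr[OF V2(1)]] by auto
    then have "Min V1 < Min V2 \<or> Min V2 < Min V1" by auto
    then show "disjnt P Q" using outer_disj_aux[OF fin \<rho> V1(1) V2(1)] outer_disj_aux[OF fin \<rho> V2(1) V1(1)] V1 V2
      unfolding disjnt_def by blast
  qed
  moreover have "\<forall>V\<in>canon A \<rho>. convex_in A V" by (auto simp: canon_def convex_in_def)
  ultimately show "canon A \<rho> \<in> IntP A" by (simp add: IntP_def)
  show "irr_refines \<rho> (canon A \<rho>)"
    unfolding irr_refines_def refines_def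
  proof (intro conjI ballI)
    fix U assume U: "U \<in> \<rho>"
    then obtain V where "V \<in> OB \<rho>" "\<forall>u\<in>U. Min V \<le> u \<and> u \<le> Max V" using outer_cover[OF fin \<rho>] by blast
    then have "U \<subseteq> A \<inter> {Min V..Max V}" using part_sub[OF p U] by auto
    then show "\<exists>W\<in>canon A \<rho>. U \<subseteq> W" using \<open>V \<in> OB \<rho>\<close> by (auto simp: canon_def)
  next
    fix W assume "W \<in> canon A \<rho>"
    then obtain V where V: "V \<in> OB \<rho>" "W = A \<inter> {Min V..Max V}" by (auto simp: canon_def)
    then show "\<exists>U\<in>\<rho>. Min W \<in> U \<and> Max W \<in> U" using ivmin[OF V(1)] OBr blockMinMax[OF fin p] by auto
  qed
qed

lemma part_subset_eq: "partition_on A P \<Longrightarrow> partition_on A Q \<Longrightarrow> P \<subseteq> Q \<Longrightarrow> P = Q"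
proof -
  assume p: "partition_on A P" and q: "partition_on A Q" and s: "P \<subseteq> Q"
  { fix X assume X: "X \<in> Q"
    obtain x where x: "x \<in> X" using part_ne[OF q X] by blast
    then have "x \<in> A" using part_sub[OF q X] by blast
    then obtain Y where "Y \<in> P" "x \<in> Y" using part_cover[OF p] by blast
    then have "X \<in> P" using part_uniq[OF q X, of Y x] s x by blast }
  then show ?thesis using s by blast
qed

lemma convexD: "convex_in A V \<Longrightarrow> a \<in> V \<Longrightarrow> b \<in> V \<Longrightarrow> y \<in> A \<Longrightarrow> a \<le> y \<Longrightarrow> y \<le> b \<Longrightarrow> y \<in> V"
  unfolding convex_in_def by blast

lemma canon_unique:
  assumes fin: "finite A" and \<rho>: "\<rho> \<in> NCp A" and \<sigma>: "\<sigma> \<in> IntP A" and ir: "irr_refines \<rho> \<sigma>"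
  shows "\<sigma> = canon A \<rho>"
proof (rule part_subset_eq)
  have p: "partition_on A \<rho>" using \<rho> by (simp add: NCp_def)
  have ps: "partition_on A \<sigma>" and cv: "\<And>V. V \<in> \<sigma> \<Longrightarrow> convex_in A V" using \<sigma> by (auto simp: IntP_def)
  show "partition_on A \<sigma>" by fact
  show "partition_on A (canon A \<rho>)" using canon_IntP[OF fin \<rho>] by (simp add: IntP_def)
  show "\<sigma> \<subseteq> canon A \<rho>"
  proof
    fix W assume W: "W \<in> \<sigma>"
    note mW = blockMinMax[OF fin ps W]
    obtain U where U: "U \<in> \<rho>" "Min W \<in> U" "Max W \<in> U" using ir W by (auto simp: irr_refines_def)
    note mU = blockMinMax[OF fin p U(1)]
    obtain W' where W': "W' \<in> \<sigma>" "U \<subseteq> W'" using ir U(1) by (auto simp: irr_refines_def refines_def)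
    have "W' = W" using part_uniq[OF ps W' (1) W, of "Min W"] W' U mW by blast
    then have UW: "U \<subseteq> W" using W' by simp
    have Weq: "W = A \<inter> {Min U..Max U}"
    proof
      show "W \<subseteq> A \<inter> {Min U..Max U}"
      proof
        fix w assume w: "w \<in> W"
        have "Min U \<le> Min W" "Max W \<le> Max U" using mU U by auto
        then show "w \<in> A \<inter> {Min U..Max U}" using w mW part_sub[OF ps W] by force
      qed
      show "A \<inter> {Min U..Max U} \<subseteq> W"
      proof
        fix x assume x: "x \<in> A \<inter> {Min U..Max U}"
        have a: "Min U \<in> W" "Max U \<in> W" using UW mU by auto
        show "x \<in> W" using convexD[OF cv[OF W] a, of x] x by simp
      qed
    qed
    have "U \<in> OB \<rho>"
    proof (rule ccontr)
      assume "U \<notin> OB \<rho>"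
      then have "\<exists>U''\<in>\<rho>. nested_in U U''" using U(1) by (simp add: OB_def)
      then obtain U'' where U'': "U'' \<in> \<rho>" "nested_in U U''" by blast
      note mU'' = blockMinMax[OF fin p U''(1)]
      obtain W'' where W'': "W'' \<in> \<sigma>" "U'' \<subseteq> W''" using ir U''(1) by (auto simp: irr_refines_def refines_def)
      have le: "Min U'' \<le> Min U" "Min U \<le> Max U''" using U'' mU by (auto simp: nested_in_def)
      show False
      proof (cases "W'' = W")
        case True
        then have "Min U \<le> Min U''" using W'' Weq mU'' by auto
        then have "Min U'' = Min U" using le by simp
        then have "U'' = U" using part_uniq[OF p U''(1) U(1), of "Min U"] mU mU'' by simp
        then show False using U''(2) by (simp add: nested_in_def)
      next
        case False
        have "Min U \<in> A" using mU part_sub[OF p U(1)] by blast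
        moreover have "Min U'' \<in> W''" "Max U'' \<in> W''" using W''(2) mU'' by auto
        ultimately have "Min U \<in> W''" using convexD[OF cv[OF W''(1)], of "Min U''" "Max U''" "Min U"] le by blast
        then show False using part_uniq[OF ps W''(1) W, of "Min U"] UW mU False by blast
      qed
    qed
    then show "W \<in> canon A \<rho>" using Weq by (auto simp: canon_def)
  qed
qed

lemma L2:
  assumes fin: "finite A"
  shows "(\<Sum>\<rho>\<in>NCp A. g \<rho>) = (\<Sum>\<sigma>\<in>IntP A. \<Sum>\<rho>\<in>{\<rho>\<in>NCp A. irr_refines \<rho> \<sigma>}. g \<rho>)"
proof -
  have "NCp A = (\<Union>\<sigma>\<in>IntP A. {\<rho>\<in>NCp A. irr_refines \<rho> \<sigma>})"
    using canon_IntP[OF fin] by blast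
  then have "(\<Sum>\<rho>\<in>NCp A. g \<rho>) = (\<Sum>\<rho>\<in>(\<Union>\<sigma>\<in>IntP A. {\<rho>\<in>NCp A. irr_refines \<rho> \<sigma>}). g \<rho>)" by simp
  also have "\<dots> = (\<Sum>\<sigma>\<in>IntP A. \<Sum>\<rho>\<in>{\<rho>\<in>NCp A. irr_refines \<rho> \<sigma>}. g \<rho>)"
  proof (rule sum.UNION_disjoint)
    show "finite (IntP A)" using finite_IntP[OF fin] .
    show "\<forall>\<sigma>\<in>IntP A. finite {\<rho> \<in> NCp A. irr_refines \<rho> \<sigma>}" using finite_NCp[OF fin] by auto
    show "\<forall>\<sigma>\<in>IntP A. \<forall>\<sigma>'\<in>IntP A. \<sigma> \<noteq> \<sigma>' \<longrightarrow> {\<rho> \<in> NCp A. irr_refines \<rho> \<sigma>} \<inter> {\<rho> \<in> NCp A. irr_refines \<rho> \<sigma>'} = {}"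
      using canon_unique[OF fin] by blast
  qed
  finally show ?thesis .
qed


definition smono :: "nat set \<Rightarrow> (nat \<Rightarrow> nat) \<Rightarrow> bool" where
  "smono X h \<longleftrightarrow> (\<forall>x\<in>X. \<forall>y\<in>X. x < y \<longrightarrow> h x < h y)"

lemma smono_less: "smono X h \<Longrightarrow> x \<in> X \<Longrightarrow> y \<in> X \<Longrightarrow> h x < h y \<longleftrightarrow> x < y"
  unfolding smono_def by (metis less_asym linorder_neqE_nat)

lemma smono_le: "smono X h \<Longrightarrow> x \<in> X \<Longrightarrow> y \<in> X \<Longrightarrow> h x \<le> h y \<longleftrightarrow> x \<le> y"
  using smono_less by (metis not_less)

lemma smono_inj: "smono X h \<Longrightarrow> inj_on h X"
  unfolding inj_on_def using smono_le by (metis antisym order_refl)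

lemma smono_Min: assumes h: "smono X h" and V: "V \<subseteq> X" "finite V" "V \<noteq> {}"
  shows "Min (h ` V) = h (Min V)" "Max (h ` V) = h (Max V)"
proof -
  have mV: "Min V \<in> V" "Max V \<in> V" using V by auto
  have f: "finite (h ` V)" "h ` V \<noteq> {}" using V by auto
  show "Min (h ` V) = h (Min V)"
  proof (rule antisym)
    show "Min (h ` V) \<le> h (Min V)" using f mV by simp
    have "\<forall>x\<in>V. h (Min V) \<le> h x"
    proof
      fix x assume x: "x \<in> V"
      then have "Min V \<le> x" using V by simp
      then show "h (Min V) \<le> h x" using smono_le[OF h, of "Min V" x] x mV V(1) by blast
    qed
    then show "h (Min V) \<le> Min (h ` V)" using f by simp
  qed
  show "Max (h ` V) = h (Max V)"
  proof (rule antisym)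
    show "h (Max V) \<le> Max (h ` V)" using f mV by simp
    have "\<forall>x\<in>V. h x \<le> h (Max V)"
    proof
      fix x assume x: "x \<in> V"
      then have "x \<le> Max V" using V by simp
      then show "h x \<le> h (Max V)" using smono_le[OF h, of x "Max V"] x mV V(1) by blast
    qed
    then show "Max (h ` V) \<le> h (Max V)" using f by simp
  qed
qed

lemma smono_nested:
  assumes h: "smono X h" and U: "U \<subseteq> X" "finite U" "U \<noteq> {}" and V: "V \<subseteq> X" "finite V" "V \<noteq> {}"
  shows "nested_in (h ` U) (h ` V) \<longleftrightarrow> nested_in U V"
proof -
  have mV: "Min V \<in> X" "Max V \<in> X" using V(1) Min_in[OF V(2,3)] Max_in[OF V(2,3)] by blast+
  have eq: "h ` V = h ` U \<longleftrightarrow> V = U" using inj_on_image_eq_iff[OF smono_inj[OF h] V(1) U(1)] .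
  have "(\<forall>w\<in>h ` U. Min (h ` V) \<le> w \<and> w \<le> Max (h ` V)) \<longleftrightarrow> (\<forall>w\<in>U. Min V \<le> w \<and> w \<le> Max V)"
    using smono_Min[OF h V] smono_le[OF h] mV U(1) by auto
  then show ?thesis unfolding nested_in_def using eq by blast
qed

definition M :: "(nat \<Rightarrow> nat) \<Rightarrow> nat set set \<Rightarrow> nat set set" where
  "M h P = (`) h ` P"

lemma M_part:
  assumes h: "smono X h" and P: "partition_on X P"
  shows "partition_on (h ` X) (M h P)"
proof -
  have "partition_on (h ` X) ((`) h ` P - {{}})" by (rule partition_on_inj_image[OF P smono_inj[OF h]])
  moreover have "(`) h ` P - {{}} = M h P" using partition_onD3[OF P] by (auto simp: M_def)
  ultimately show ?thesis by simp
qed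

lemma M_NCp:
  assumes h: "smono X h" and P: "P \<in> NCp X"
  shows "M h P \<in> NCp (h ` X)"
proof -
  have p: "partition_on X P" and nc: "noncrossing P" using P by (auto simp: NCp_def)
  have "noncrossing (M h P)"
    unfolding noncrossing_def
  proof (intro ballI impI notI)
    fix V' W' assume V': "V' \<in> M h P" and W': "W' \<in> M h P" and ne: "V' \<noteq> W'"
      and "\<exists>a b c d. a < b \<and> b < c \<and> c < d \<and> a \<in> V' \<and> c \<in> V' \<and> b \<in> W' \<and> d \<in> W'"
    then obtain a b c d where abcd: "a < b" "b < c" "c < d" "a \<in> V'" "c \<in> V'" "b \<in> W'" "d \<in> W'" by blast
    obtain V W where VW: "V \<in> P" "W \<in> P" "V' = h ` V" "W' = h ` W" using V' W' by (auto simp: M_def)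
    have "V \<noteq> W" using ne VW by auto
    obtain a' c' where "a' \<in> V" "c' \<in> V" "a = h a'" "c = h c'" using abcd VW by auto
    moreover obtain b' d' where "b' \<in> W" "d' \<in> W" "b = h b'" "d = h d'" using abcd VW by auto
    moreover have "V \<subseteq> X" "W \<subseteq> X" using part_sub[OF p] VW by auto
    ultimately have "a' < b'" "b' < c'" "c' < d'" using abcd smono_less[OF h] by (metis subsetD)+
    then show False using noncrossingD[OF nc VW(1,2) \<open>V \<noteq> W\<close>] \<open>a' \<in> V\<close> \<open>c' \<in> V\<close> \<open>b' \<in> W\<close> \<open>d' \<in> W\<close> by blast
  qed
  then show ?thesis using M_part[OF h p] by (simp add: NCp_def)
qed

lemma M_IntP:
  assumes h: "smono X h" and P: "P \<in> IntP X"
  shows "M h P \<in> IntP (h ` X)"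
proof -
  have p: "partition_on X P" and cv: "\<And>V. V \<in> P \<Longrightarrow> convex_in X V" using P by (auto simp: IntP_def)
  have "\<forall>V'\<in>M h P. convex_in (h ` X) V'"
  proof
    fix V' assume "V' \<in> M h P"
    then obtain V where V: "V \<in> P" "V' = h ` V" by (auto simp: M_def)
    have VX: "V \<subseteq> X" using part_sub[OF p V(1)] .
    show "convex_in (h ` X) V'"
      unfolding convex_in_def
    proof (intro ballI impI)
      fix x z y assume "x \<in> V'" "z \<in> V'" "y \<in> h ` X" "x \<le> y" "y \<le> z"
      then obtain a b c where abc: "a \<in> V" "c \<in> V" "b \<in> X" "x = h a" "z = h c" "y = h b" "h a \<le> h b" "h b \<le> h c"
        using V by auto
      then have "a \<le> b" "b \<le> c" using smono_le[OF h] VX by (meson subsetD)+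
      then have "b \<in> V" using convexD[OF cv[OF V(1)] abc(1,2,3)] by simp
      then show "y \<in> V'" using abc V by auto
    qed
  qed
  then show ?thesis using M_part[OF h p] by (simp add: IntP_def)
qed

lemma M_OB:
  assumes h: "smono X h" and fin: "finite X" and p: "partition_on X P"
  shows "OB (M h P) = M h (OB P)" "IB (M h P) = M h (IB P)"
proof -
  have blk: "\<And>V. V \<in> P \<Longrightarrow> V \<subseteq> X \<and> finite V \<and> V \<noteq> {}" using part_sub[OF p] part_fin[OF fin p] part_ne[OF p] by blast
  have key: "\<And>U. U \<in> P \<Longrightarrow> (\<exists>V'\<in>M h P. nested_in (h ` U) V') \<longleftrightarrow> (\<exists>V\<in>P. nested_in U V)"
  proof -
    fix U assume U: "U \<in> P"
    show "(\<exists>V'\<in>M h P. nested_in (h ` U) V') \<longleftrightarrow> (\<exists>V\<in>P. nested_in U V)"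
    proof
      assume "\<exists>V'\<in>M h P. nested_in (h ` U) V'"
      then obtain V where "V \<in> P" "nested_in (h ` U) (h ` V)" by (auto simp: M_def)
      then show "\<exists>V\<in>P. nested_in U V" using smono_nested[OF h] blk U by blast
    next
      assume "\<exists>V\<in>P. nested_in U V"
      then obtain V where "V \<in> P" "nested_in U V" by blast
      then have "nested_in (h ` U) (h ` V)" using smono_nested[OF h] blk U by blast
      then show "\<exists>V'\<in>M h P. nested_in (h ` U) V'" using \<open>V \<in> P\<close> by (auto simp: M_def)
    qed
  qed
  show "OB (M h P) = M h (OB P)"
    unfolding OB_def M_def using key unfolding M_def by auto
  show "IB (M h P) = M h (IB P)"
  proof (rule set_eqI)
    fix W' show "W' \<in> IB (M h P) \<longleftrightarrow> W' \<in> M h (IB P)"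
    proof
      assume "W' \<in> IB (M h P)"
      then obtain U where U: "U \<in> P" "W' = h ` U" "\<exists>V'\<in>M h P. nested_in (h ` U) V'"
        by (auto simp: IB_def M_def)
      then have "\<exists>V\<in>P. nested_in U V" using key by blast
      then show "W' \<in> M h (IB P)" using U by (auto simp: IB_def M_def)
    next
      assume "W' \<in> M h (IB P)"
      then obtain U where U: "U \<in> P" "W' = h ` U" "\<exists>V\<in>P. nested_in U V"
        by (auto simp: IB_def M_def)
      then have "\<exists>V'\<in>M h P. nested_in (h ` U) V'" using key by blast
      then show "W' \<in> IB (M h P)" using U by (auto simp: IB_def M_def)
    qed
  qed
qed


definition rnk :: "nat set \<Rightarrow> nat \<Rightarrow> nat" where
  "rnk W i = card {j\<in>W. j < i}"

lemma rank_smono: "finite W \<Longrightarrow> smono W (rnk W)"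
  unfolding smono_def rnk_def
proof (intro ballI impI)
  fix x y assume fin: "finite W" and x: "x \<in> W" and y: "y \<in> W" and xy: "x < y"
  have "{j\<in>W. j < x} \<subset> {j\<in>W. j < y}" using x xy by auto
  then show "card {j\<in>W. j < x} < card {j\<in>W. j < y}" using fin by (intro psubset_card_mono) auto
qed

lemma rank_image: assumes fin: "finite W" shows "rnk W ` W = {0..<card W}"
proof -
  have sub: "rnk W ` W \<subseteq> {0..<card W}"
  proof
    fix y assume "y \<in> rnk W ` W"
    then obtain i where i: "i \<in> W" "y = rnk W i" by blast
    have "{j\<in>W. j < i} \<subset> W" using i by auto
    then show "y \<in> {0..<card W}" using i fin by (auto simp: rnk_def intro: psubset_card_mono)
  qed
  have "card (rnk W ` W) = card W" using card_image[OF smono_inj[OF rank_smono[OF fin]]] .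
  then show ?thesis using sub by (intro card_subset_eq) auto
qed

definition unrank :: "nat set \<Rightarrow> nat \<Rightarrow> nat" where
  "unrank W = inv_into W (rnk W)"

lemma unrank_props:
  assumes fin: "finite W"
  shows "\<And>i. i \<in> W \<Longrightarrow> unrank W (rnk W i) = i"
    and "\<And>x. x < card W \<Longrightarrow> rnk W (unrank W x) = x"
    and "\<And>x. x < card W \<Longrightarrow> unrank W x \<in> W"
    and "unrank W ` {0..<card W} = W"
    and "smono {0..<card W} (unrank W)"
proof -
  have inj: "inj_on (rnk W) W" using smono_inj[OF rank_smono[OF fin]] .
  note im = rank_image[OF fin]
  show a: "\<And>i. i \<in> W \<Longrightarrow> unrank W (rnk W i) = i" unfolding unrank_def using inj by simp
  show b: "\<And>x. x < card W \<Longrightarrow> rnk W (unrank W x) = x" unfolding unrank_def using im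
    by (metis atLeastLessThan_iff f_inv_into_f zero_le)
  show c: "\<And>x. x < card W \<Longrightarrow> unrank W x \<in> W" unfolding unrank_def using im
    by (metis atLeastLessThan_iff inv_into_into zero_le)
  show "unrank W ` {0..<card W} = W"
  proof
    show "unrank W ` {0..<card W} \<subseteq> W" using c by auto
    show "W \<subseteq> unrank W ` {0..<card W}"
    proof
      fix i assume "i \<in> W"
      then have "rnk W i \<in> {0..<card W}" using im by blast
      then show "i \<in> unrank W ` {0..<card W}" using a[OF \<open>i \<in> W\<close>] by (metis image_eqI)
    qed
  qed
  show "smono {0..<card W} (unrank W)"
    unfolding smono_def
  proof (intro ballI impI)
    fix x y assume x: "x \<in> {0..<card W}" and y: "y \<in> {0..<card W}" and xy: "x < y"
    have "rnk W (unrank W x) < rnk W (unrank W y)" using b x y xy by simp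
    then show "unrank W x < unrank W y"
      using smono_less[OF rank_smono[OF fin]] c x y by auto
  qed
qed

lemma nths_unrank:
  assumes fin: "finite W" and V: "V \<subseteq> {0..<card W}"
  shows "nths (nths as W) V = nths as (unrank W ` V)"
proof -
  have "{i \<in> W. \<exists>j \<in> V. card {i' \<in> W. i' < i} = j} = unrank W ` V"
  proof
    show "{i \<in> W. \<exists>j \<in> V. card {i' \<in> W. i' < i} = j} \<subseteq> unrank W ` V"
    proof
      fix i assume "i \<in> {i \<in> W. \<exists>j \<in> V. card {i' \<in> W. i' < i} = j}"
      then have i: "i \<in> W" "rnk W i \<in> V" by (auto simp: rnk_def)
      then show "i \<in> unrank W ` V" using unrank_props(1)[OF fin i(1)] by (metis image_eqI)
    qed
    show "unrank W ` V \<subseteq> {i \<in> W. \<exists>j \<in> V. card {i' \<in> W. i' < i} = j}"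
    proof
      fix i assume "i \<in> unrank W ` V"
      then obtain x where x: "x \<in> V" "i = unrank W x" by blast
      then have "x < card W" using V by auto
      then have "i \<in> W" "rnk W i = x" using unrank_props(2,3)[OF fin] x by auto
      then show "i \<in> {i \<in> W. \<exists>j \<in> V. card {i' \<in> W. i' < i} = j}" using x by (auto simp: rnk_def)
    qed
  qed
  then show ?thesis by (simp add: nths_nths)
qed

lemma M_inverse:
  assumes fin: "finite W"
  shows "\<And>P. P \<subseteq> Pow {0..<card W} \<Longrightarrow> M (rnk W) (M (unrank W) P) = P"
    and "\<And>Q. Q \<subseteq> Pow W \<Longrightarrow> M (unrank W) (M (rnk W) Q) = Q"
proof -
  have a: "\<And>V. V \<subseteq> {0..<card W} \<Longrightarrow> rnk W ` unrank W ` V = V"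
  proof -
    fix V assume V: "V \<subseteq> {0..<card W}"
    have "rnk W ` unrank W ` V = (\<lambda>x. rnk W (unrank W x)) ` V" by (simp add: image_image)
    also have "\<dots> = (\<lambda>x. x) ` V" using unrank_props(2)[OF fin] V by (intro image_cong) auto
    finally show "rnk W ` unrank W ` V = V" by simp
  qed
  have b: "\<And>V. V \<subseteq> W \<Longrightarrow> unrank W ` rnk W ` V = V"
  proof -
    fix V assume V: "V \<subseteq> W"
    have "unrank W ` rnk W ` V = (\<lambda>x. unrank W (rnk W x)) ` V" by (simp add: image_image)
    also have "\<dots> = (\<lambda>x. x) ` V" using unrank_props(1)[OF fin] V by (intro image_cong) auto
    finally show "unrank W ` rnk W ` V = V" by simp
  qed
  show "\<And>P. P \<subseteq> Pow {0..<card W} \<Longrightarrow> M (rnk W) (M (unrank W) P) = P"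
  proof -
    fix P :: "nat set set" assume P: "P \<subseteq> Pow {0..<card W}"
    have "M (rnk W) (M (unrank W) P) = (\<lambda>V. rnk W ` unrank W ` V) ` P" by (simp add: M_def image_image)
    also have "\<dots> = (\<lambda>x. x) ` P" using a P by (intro image_cong) auto
    finally show "M (rnk W) (M (unrank W) P) = P" by simp
  qed
  show "\<And>Q. Q \<subseteq> Pow W \<Longrightarrow> M (unrank W) (M (rnk W) Q) = Q"
  proof -
    fix Q :: "nat set set" assume Q: "Q \<subseteq> Pow W"
    have "M (unrank W) (M (rnk W) Q) = (\<lambda>V. unrank W ` rnk W ` V) ` Q" by (simp add: M_def image_image)
    also have "\<dots> = (\<lambda>x. x) ` Q" using b Q by (intro image_cong) auto
    finally show "M (unrank W) (M (rnk W) Q) = Q" by simp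
  qed
qed


lemma restr_unrank:
  assumes fin: "finite W" and V: "V \<subseteq> {0..<card W}"
  shows "restr r (unrank W ` V) as = restr r V (nths as W)"
  unfolding restr_def by (simp only: nths_unrank[OF fin V])

lemma inj_img: "inj_on h X \<Longrightarrow> P \<subseteq> Pow X \<Longrightarrow> inj_on ((`) h) P"
proof (rule inj_onI)
  fix x y assume h: "inj_on h X" and P: "P \<subseteq> Pow X" and x: "x \<in> P" and y: "y \<in> P" and e: "h ` x = h ` y"
  have "x \<subseteq> X" "y \<subseteq> X" using P x y by auto
  then show "x = y" using inj_on_image_eq_iff[OF h] e by blast
qed

lemma part_Pow: "partition_on X P \<Longrightarrow> P \<subseteq> Pow X"
  using part_sub by blast

lemma Fw_M:
  assumes fin: "finite W" and P: "partition_on {0..<card W} P"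
  shows "Fw r1 r2 as (M (unrank W) P) = Fw r1 r2 (nths as W) P"
proof -
  have h: "smono {0..<card W} (unrank W)" using unrank_props(5)[OF fin] .
  have inj: "inj_on (unrank W) {0..<card W}" using smono_inj[OF h] .
  have OBs: "OB P \<subseteq> Pow {0..<card W}" "IB P \<subseteq> Pow {0..<card W}"
    using part_Pow[OF P] by (auto simp: OB_def IB_def)
  have "(\<Prod>V\<in>OB (M (unrank W) P). restr r1 V as) = (\<Prod>V\<in>OB P. restr r1 V (nths as W))"
  proof -
    have "(\<Prod>V\<in>OB (M (unrank W) P). restr r1 V as) = (\<Prod>V\<in>(`) (unrank W) ` OB P. restr r1 V as)"
      using M_OB(1)[OF h _ P] by (simp add: M_def)
    also have "\<dots> = (\<Prod>V\<in>OB P. restr r1 (unrank W ` V) as)"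
      by (rule prod.reindex_cong[OF inj_img[OF inj OBs(1)] refl refl])
    also have "\<dots> = (\<Prod>V\<in>OB P. restr r1 V (nths as W))"
      using restr_unrank[OF fin] OBs(1) by (intro prod.cong refl) blast
    finally show ?thesis .
  qed
  moreover have "(\<Prod>V\<in>IB (M (unrank W) P). restr r2 V as) = (\<Prod>V\<in>IB P. restr r2 V (nths as W))"
  proof -
    have "(\<Prod>V\<in>IB (M (unrank W) P). restr r2 V as) = (\<Prod>V\<in>(`) (unrank W) ` IB P. restr r2 V as)"
      using M_OB(2)[OF h _ P] by (simp add: M_def)
    also have "\<dots> = (\<Prod>V\<in>IB P. restr r2 (unrank W ` V) as)"
      by (rule prod.reindex_cong[OF inj_img[OF inj OBs(2)] refl refl])
    also have "\<dots> = (\<Prod>V\<in>IB P. restr r2 V (nths as W))"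
      using restr_unrank[OF fin] OBs(2) by (intro prod.cong refl) blast
    finally show ?thesis .
  qed
  ultimately show ?thesis by (simp add: Fw_def)
qed

lemma prod_M:
  assumes fin: "finite W" and P: "partition_on {0..<card W} P"
  shows "(\<Prod>V\<in>M (unrank W) P. restr r V as) = (\<Prod>V\<in>P. restr r V (nths as W))"
proof -
  have h: "smono {0..<card W} (unrank W)" using unrank_props(5)[OF fin] .
  have inj: "inj_on (unrank W) {0..<card W}" using smono_inj[OF h] .
  have "(\<Prod>V\<in>M (unrank W) P. restr r V as) = (\<Prod>V\<in>P. restr r (unrank W ` V) as)"
    unfolding M_def by (rule prod.reindex_cong[OF inj_img[OF inj part_Pow[OF P]] refl refl])
  also have "\<dots> = (\<Prod>V\<in>P. restr r V (nths as W))"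
    using restr_unrank[OF fin] part_Pow[OF P] by (intro prod.cong refl) blast
  finally show ?thesis .
qed

lemma sum_NC_transfer:
  assumes fin: "finite W"
  shows "(\<Sum>P\<in>NCp {0..<card W}. Fw r1 r2 (nths as W) P) = (\<Sum>Q\<in>NCp W. Fw r1 r2 as Q)"
proof (rule sum.reindex_bij_witness[where j = "M (unrank W)" and i = "M (rnk W)"])
  have h: "smono {0..<card W} (unrank W)" using unrank_props(5)[OF fin] .
  have g: "smono W (rnk W)" using rank_smono[OF fin] .
  fix P assume P: "P \<in> NCp {0..<card W}"
  have Pp: "partition_on {0..<card W} P" using P by (simp add: NCp_def)
  show "M (rnk W) (M (unrank W) P) = P" using M_inverse(1)[OF fin part_Pow[OF Pp]] .
  show "M (unrank W) P \<in> NCp W" using M_NCp[OF h P] unrank_props(4)[OF fin] by simp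
  show "Fw r1 r2 as (M (unrank W) P) = Fw r1 r2 (nths as W) P" using Fw_M[OF fin Pp] .
next
  have g: "smono W (rnk W)" using rank_smono[OF fin] .
  fix Q assume Q: "Q \<in> NCp W"
  have Qp: "partition_on W Q" using Q by (simp add: NCp_def)
  show "M (unrank W) (M (rnk W) Q) = Q" using M_inverse(2)[OF fin part_Pow[OF Qp]] .
  show "M (rnk W) Q \<in> NCp {0..<card W}" using M_NCp[OF g Q] rank_image[OF fin] by simp
qed

lemma sum_Int_transfer:
  assumes fin: "finite W"
  shows "(\<Sum>P\<in>IntP {0..<card W}. \<Prod>V\<in>P. restr r V (nths as W)) = (\<Sum>Q\<in>IntP W. \<Prod>V\<in>Q. restr r V as)"
proof (rule sum.reindex_bij_witness[where j = "M (unrank W)" and i = "M (rnk W)"])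
  have h: "smono {0..<card W} (unrank W)" using unrank_props(5)[OF fin] .
  fix P assume P: "P \<in> IntP {0..<card W}"
  have Pp: "partition_on {0..<card W} P" using P by (simp add: IntP_def)
  show "M (rnk W) (M (unrank W) P) = P" using M_inverse(1)[OF fin part_Pow[OF Pp]] .
  show "M (unrank W) P \<in> IntP W" using M_IntP[OF h P] unrank_props(4)[OF fin] by simp
  show "(\<Prod>V\<in>M (unrank W) P. restr r V as) = (\<Prod>V\<in>P. restr r V (nths as W))" using prod_M[OF fin Pp] .
next
  have g: "smono W (rnk W)" using rank_smono[OF fin] .
  fix Q assume Q: "Q \<in> IntP W"
  have Qp: "partition_on W Q" using Q by (simp add: IntP_def)
  show "M (unrank W) (M (rnk W) Q) = Q" using M_inverse(2)[OF fin part_Pow[OF Qp]] .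
  show "M (rnk W) Q \<in> IntP {0..<card W}" using M_IntP[OF g Q] rank_image[OF fin] by simp
qed

lemma Int_part_eq: "Int_part n = IntP {0..<n}"
proof -
  have "(\<forall>V\<in>P. \<exists>i j. V = {i..j}) \<longleftrightarrow> (\<forall>V\<in>P. convex_in {0..<n} V)" if P: "partition_on {0..<n} P" for P
  proof
    assume "\<forall>V\<in>P. \<exists>i j. V = {i..j}"
    then show "\<forall>V\<in>P. convex_in {0..<n} V" unfolding convex_in_def by fastforce
  next
    assume cv: "\<forall>V\<in>P. convex_in {0..<n} V"
    show "\<forall>V\<in>P. \<exists>i j. V = {i..j}"
    proof
      fix V assume V: "V \<in> P"
      note mm = blockMinMax[OF _ P V]
      have "V = {Min V..Max V}"
      proof
        show "V \<subseteq> {Min V..Max V}" using mm by auto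
        show "{Min V..Max V} \<subseteq> V"
        proof
          fix y assume y: "y \<in> {Min V..Max V}"
          have "Max V \<in> {0..<n}" using part_sub[OF P V] mm by blast
          then have "y \<in> {0..<n}" using y by auto
          then show "y \<in> V" using convexD[OF cv[rule_format, OF V] mm(1) mm(2)] y by auto
        qed
      qed
      then show "\<exists>i j. V = {i..j}" by blast
    qed
  qed
  then show ?thesis unfolding Int_part_def IntP_def by auto
qed


lemma len_nths_W: "W \<subseteq> {0..<length as} \<Longrightarrow> length (nths as W) = card W"
  by (simp add: length_nths) (metis (no_types, lifting) Collect_cong atLeastLessThan_iff set_eq_iff subsetD Collect_mem_eq)

lemma TB:
  assumes hyp: "is_boolean_cumulants \<theta> \<beta>" and W: "W \<subseteq> {0..<length as}" "W \<noteq> {}"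
  shows "\<theta> (prod_list (nths as W)) = (\<Sum>\<sigma>\<in>IntP W. \<Prod>V\<in>\<sigma>. restr \<beta> V as)"
proof -
  have fin: "finite W" using W(1) finite_subset by blast
  have len: "length (nths as W) = card W" using len_nths_W[OF W(1)] .
  then have "nths as W \<noteq> []" using fin W(2) by auto
  then have "\<theta> (prod_list (nths as W)) = (\<Sum>\<sigma>\<in>Int_part (card W). \<Prod>V\<in>\<sigma>. restr \<beta> V (nths as W))"
    using hyp len unfolding is_boolean_cumulants_def by metis
  also have "\<dots> = (\<Sum>\<sigma>\<in>IntP W. \<Prod>V\<in>\<sigma>. restr \<beta> V as)"
    unfolding Int_part_eq using sum_Int_transfer[OF fin] .
  finally show ?thesis .
qed

lemma TC:
  assumes hyp: "is_cfree_cumulants \<theta> r2 r1" and W: "W \<subseteq> {0..<length as}" "W \<noteq> {}"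
  shows "\<theta> (prod_list (nths as W)) = (\<Sum>\<sigma>\<in>NCp W. Fw r1 r2 as \<sigma>)"
proof -
  have fin: "finite W" using W(1) finite_subset by blast
  have len: "length (nths as W) = card W" using len_nths_W[OF W(1)] .
  then have "nths as W \<noteq> []" using fin W(2) by auto
  then have "\<theta> (prod_list (nths as W)) = (\<Sum>\<sigma>\<in>NC (card W). Fw r1 r2 (nths as W) \<sigma>)"
    using hyp len unfolding is_cfree_cumulants_def Fw_def by metis
  also have "\<dots> = (\<Sum>\<sigma>\<in>NCp W. Fw r1 r2 as \<sigma>)"
    unfolding NC_def NCp_def[symmetric] using sum_NC_transfer[OF fin] .
  finally show ?thesis .
qed

lemma TF:
  assumes hyp: "is_free_cumulants \<theta> r" and W: "W \<subseteq> {0..<length as}" "W \<noteq> {}"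
  shows "\<theta> (prod_list (nths as W)) = (\<Sum>\<sigma>\<in>NCp W. Fw r r as \<sigma>)"
proof -
  have "is_cfree_cumulants \<theta> r r"
    unfolding is_cfree_cumulants_def
  proof (intro allI impI)
    fix bs :: "'a list" assume "bs \<noteq> []"
    then have "\<theta> (prod_list bs) = (\<Sum>\<sigma>\<in>NC (length bs). \<Prod>V\<in>\<sigma>. restr r V bs)"
      using hyp unfolding is_free_cumulants_def by blast
    also have "\<dots> = (\<Sum>\<sigma>\<in>NC (length bs). Fw r r bs \<sigma>)"
    proof (rule sum.cong[OF refl])
      fix \<sigma> assume "\<sigma> \<in> NC (length bs)"
      then have "finite \<sigma>" using finite_elements[of "{0..<length bs}" \<sigma>] by (simp add: NC_def)
      then show "(\<Prod>V\<in>\<sigma>. restr r V bs) = Fw r r bs \<sigma>" using Fw_same by metis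
    qed
    finally show "\<theta> (prod_list bs) = (\<Sum>\<sigma>\<in>NC (length bs). (\<Prod>V\<in>OB \<sigma>. restr r V bs) * (\<Prod>W\<in>IB \<sigma>. restr r W bs))"
      by (simp add: Fw_def)
  qed
  then show ?thesis using TC W by blast
qed

lemma claim:
  assumes hB: "is_boolean_cumulants \<theta> \<beta>" and hC: "is_cfree_cumulants \<theta> r2 r1"
  shows "W \<subseteq> {0..<length as} \<Longrightarrow> W \<noteq> {} \<Longrightarrow> restr \<beta> W as = (\<Sum>\<tau>\<in>IRR W. Fw r1 r2 as \<tau>)"
proof (induction W rule: measure_induct_rule[where f = card])
  case (less W)
  have fin: "finite W" using less.prems(1) finite_subset by blast
  let ?S = "\<lambda>V. \<Sum>\<tau>\<in>IRR V. Fw r1 r2 as \<tau>"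
  let ?f1 = "\<lambda>\<sigma>. \<Prod>V\<in>\<sigma>. restr \<beta> V as"
  let ?f2 = "\<lambda>\<sigma>. \<Prod>V\<in>\<sigma>. ?S V"
  have e1: "\<theta> (prod_list (nths as W)) = (\<Sum>\<sigma>\<in>IntP W. ?f1 \<sigma>)" using TB[OF hB less.prems] .
  have "\<theta> (prod_list (nths as W)) = (\<Sum>\<sigma>\<in>NCp W. Fw r1 r2 as \<sigma>)" using TC[OF hC less.prems] .
  also have "\<dots> = (\<Sum>\<sigma>\<in>IntP W. \<Sum>\<rho>\<in>{\<rho>\<in>NCp W. irr_refines \<rho> \<sigma>}. Fw r1 r2 as \<rho>)" using L2[OF fin] .
  also have "\<dots> = (\<Sum>\<sigma>\<in>IntP W. ?f2 \<sigma>)"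
  proof (rule sum.cong[OF refl])
    fix \<sigma> assume \<sigma>: "\<sigma> \<in> IntP W"
    have "(\<Sum>\<rho>\<in>{\<rho>\<in>NCp W. irr_refines \<rho> \<sigma>}. Fw r1 r2 as \<rho>) =
      (\<Prod>V\<in>OB \<sigma>. ?S V) * (\<Prod>V\<in>IB \<sigma>. \<Sum>\<tau>\<in>IRR V. Fw r2 r2 as \<tau>)"
      using L3[OF fin IntP_NCp[OF \<sigma>]] .
    then show "(\<Sum>\<rho>\<in>{\<rho>\<in>NCp W. irr_refines \<rho> \<sigma>}. Fw r1 r2 as \<rho>) = ?f2 \<sigma>"
      using IntP_OB[OF fin \<sigma>] IntP_IB[OF fin \<sigma>] by simp
  qed
  finally have e2: "\<theta> (prod_list (nths as W)) = (\<Sum>\<sigma>\<in>IntP W. ?f2 \<sigma>)" .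
  have W0: "{W} \<in> IntP W" using less.prems(2) by (simp add: IntP_def partition_on_space convex_in_def)
  have finI: "finite (IntP W)" using finite_IntP[OF fin] .
  have rest: "(\<Sum>\<sigma>\<in>IntP W - {{W}}. ?f1 \<sigma>) = (\<Sum>\<sigma>\<in>IntP W - {{W}}. ?f2 \<sigma>)"
  proof (rule sum.cong[OF refl])
    fix \<sigma> assume \<sigma>: "\<sigma> \<in> IntP W - {{W}}"
    have p: "partition_on W \<sigma>" using \<sigma> by (simp add: IntP_def)
    show "?f1 \<sigma> = ?f2 \<sigma>"
    proof (rule prod.cong[OF refl])
      fix V assume V: "V \<in> \<sigma>"
      have VW: "V \<subseteq> W" "V \<noteq> {}" using part_sub[OF p V] part_ne[OF p V] by auto
      have "V \<noteq> W"
      proof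
        assume "V = W"
        have "\<sigma> = {W}"
        proof
          show "{W} \<subseteq> \<sigma>" using V \<open>V = W\<close> by simp
          show "\<sigma> \<subseteq> {W}"
          proof
            fix X assume X: "X \<in> \<sigma>"
            obtain x where "x \<in> X" using part_ne[OF p X] by blast
            moreover have "x \<in> W" using part_sub[OF p X] \<open>x \<in> X\<close> by blast
            ultimately have "X = W" using part_uniq[OF p X V] \<open>V = W\<close> by blast
            then show "X \<in> {W}" by simp
          qed
        qed
        then show False using \<sigma> by simp
      qed
      then have "card V < card W" using VW fin by (simp add: psubset_card_mono)
      moreover have "V \<subseteq> {0..<length as}" using VW less.prems(1) by blast
      ultimately show "restr \<beta> V as = ?S V" using less.IH VW(2) by blast
    qed
  qed
  have "?f1 {W} + (\<Sum>\<sigma>\<in>IntP W - {{W}}. ?f1 \<sigma>) = ?f2 {W} + (\<Sum>\<sigma>\<in>IntP W - {{W}}. ?f2 \<sigma>)"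
    using e1 e2 sum.remove[OF finI W0, of ?f1] sum.remove[OF finI W0, of ?f2] by simp
  then show ?case using rest by simp
qed

theorem main:
  assumes "is_boolean_cumulants \<phi> \<beta>\<phi>"
    and "is_boolean_cumulants \<psi> \<beta>\<psi>"
    and "is_free_cumulants \<psi> r\<psi>"
    and "is_cfree_cumulants \<phi> r\<psi> r\<phi>\<psi>"
    and "\<pi> \<in> NC n"
    and "length as = n"
  shows "nested_boolean \<beta>\<phi> \<beta>\<psi> \<pi> as =
    (\<Sum>\<rho>\<in>{\<rho>\<in>NC n. irr_refines \<rho> \<pi>}.
       (\<Prod>V\<in>OB \<rho>. restr r\<phi>\<psi> V as) * (\<Prod>W\<in>IB \<rho>. restr r\<psi> W as))"
proof -
  have \<pi>: "\<pi> \<in> NCp {0..<n}" using assms(5) by (simp add: NC_def NCp_def)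
  have p: "partition_on {0..<n} \<pi>" using \<pi> by (simp add: NCp_def)
  have hF: "is_cfree_cumulants \<psi> r\<psi> r\<psi>"
    using assms(3) unfolding is_cfree_cumulants_def is_free_cumulants_def
  proof (intro allI impI)
    fix bs :: "'a list" assume "bs \<noteq> []" and hyp: "\<forall>as. as \<noteq> [] \<longrightarrow> \<psi> (prod_list as) = (\<Sum>\<sigma>\<in>NC (length as). \<Prod>V\<in>\<sigma>. restr r\<psi> V as)"
    then have "\<psi> (prod_list bs) = (\<Sum>\<sigma>\<in>NC (length bs). \<Prod>V\<in>\<sigma>. restr r\<psi> V bs)" by blast
    also have "\<dots> = (\<Sum>\<sigma>\<in>NC (length bs). Fw r\<psi> r\<psi> bs \<sigma>)"
    proof (rule sum.cong[OF refl])
      fix \<sigma> assume "\<sigma> \<in> NC (length bs)"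
      then have "finite \<sigma>" using finite_elements[of "{0..<length bs}" \<sigma>] by (simp add: NC_def)
      then show "(\<Prod>V\<in>\<sigma>. restr r\<psi> V bs) = Fw r\<psi> r\<psi> bs \<sigma>" using Fw_same by metis
    qed
    finally show "\<psi> (prod_list bs) = (\<Sum>\<sigma>\<in>NC (length bs). (\<Prod>V\<in>OB \<sigma>. restr r\<psi> V bs) * (\<Prod>W\<in>IB \<sigma>. restr r\<psi> W bs))"
      by (simp add: Fw_def)
  qed
  have blk: "\<And>V. V \<in> \<pi> \<Longrightarrow> V \<subseteq> {0..<length as} \<and> V \<noteq> {}" using part_sub[OF p] part_ne[OF p] assms(6) by blast
  have c1: "\<And>V. V \<in> \<pi> \<Longrightarrow> restr \<beta>\<phi> V as = (\<Sum>\<tau>\<in>IRR V. Fw r\<phi>\<psi> r\<psi> as \<tau>)"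
    using claim[OF assms(1) assms(4)] blk by blast
  have c2: "\<And>V. V \<in> \<pi> \<Longrightarrow> restr \<beta>\<psi> V as = (\<Sum>\<tau>\<in>IRR V. Fw r\<psi> r\<psi> as \<tau>)"
    using claim[OF assms(2) hF] blk by blast
  have "nested_boolean \<beta>\<phi> \<beta>\<psi> \<pi> as =
     (\<Prod>W\<in>OB \<pi>. \<Sum>\<tau>\<in>IRR W. Fw r\<phi>\<psi> r\<psi> as \<tau>) * (\<Prod>W\<in>IB \<pi>. \<Sum>\<tau>\<in>IRR W. Fw r\<psi> r\<psi> as \<tau>)"
    unfolding nested_boolean_def
    by (intro arg_cong2[where f = "(*)"] prod.cong refl) (auto simp: OB_def IB_def c1 c2)
  also have "\<dots> = (\<Sum>\<rho>\<in>{\<rho>\<in>NCp {0..<n}. irr_refines \<rho> \<pi>}. Fw r\<phi>\<psi> r\<psi> as \<rho>)"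
    by (rule L3[OF finite_atLeastLessThan \<pi>, symmetric])
  finally show ?thesis by (simp add: Fw_def NC_def NCp_def)
qed

theorem proposition3p5:
  fixes smul :: "complex \<Rightarrow> 'a::ring_1 \<Rightarrow> 'a" and star :: "'a \<Rightarrow> 'a"
    and \<phi> \<psi> :: "'a \<Rightarrow> complex"
    and \<beta>\<phi> \<beta>\<psi> r\<psi> r\<phi>\<psi> :: "'a list \<Rightarrow> complex"
    and n :: nat and \<pi> :: "nat set set" and as :: "'a list"
  assumes "two_state_ncps smul star \<phi> \<psi>"
    and "is_boolean_cumulants \<phi> \<beta>\<phi>"
    and "is_boolean_cumulants \<psi> \<beta>\<psi>"
    and "is_free_cumulants \<psi> r\<psi>"
    and "is_cfree_cumulants \<phi> r\<psi> r\<phi>\<psi>"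
    and "\<pi> \<in> NC n"
    and "length as = n"
  shows "nested_boolean \<beta>\<phi> \<beta>\<psi> \<pi> as =
    (\<Sum>\<rho>\<in>{\<rho>\<in>NC n. irr_refines \<rho> \<pi>}.
       (\<Prod>V\<in>OB \<rho>. restr r\<phi>\<psi> V as) * (\<Prod>W\<in>IB \<rho>. restr r\<psi> W as))"
  using main[OF assms(2-7)] .

end
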